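(* There exists an absolute constant $C>0$ such that for all $d\ge1$ and $n=2^k$, the number of elementary operations involved in computing the OMADRE predictions $\hat\theta^{OM}_{\rho(1)},\dots,\hat\theta^{OM}_{\rho(N)}$ (for any ordering $\rho$ of $L_{d,n}$ and any data) is at most $C\,N(\log_2 2n)^d$, where $N=n^d$.
   Context: $L_{d,n}=[n]^d$ with $n=2^k$, $N=n^d$. A dyadic interval is a set of integers of the form $((a-1)2^s,a2^s]\cap\mathbb Z$ with integers $0\le s\le k$, $1\le a\le 2^{k-s}$; a dyadic rectangle is a product of $d$ dyadic intervals. The expert family $\mathcal S$ is the set of all dyadic rectangles of $L_{d,n}$. The online averaging rule is $r^{(S)}_{U,s}(y_U)=\bar y_U$ (the mean of $(y_u)_{u\in U}$), with $\bar y_\emptyset=0$. OMADRE is the aggregation algorithm $\mathcal A(\mathbf r,\mathcal S,\lambda)$ with these experts and rule, defined as follows (with $K=L_{d,n}$, an ordering $\rho:[N]\to K$, $\rho[a:b]=\{\rho(a),\dots,\rho(b)\}$, expert predictions $\hat y^{(S)}_{\rho(t)}=r^{(S)}_{\rho[1:t-1]\cap S,\rho(t)}(y_{\rho[1:t-1]\cap S})$, $T_\lambda(x)=\min\{\max\{x,-\lambda\},\lambda\}$): set $\alpha=1/(8\lambda^2)$, $w_{S,1}=1/|\mathcal S|$; for $t=1,\dots,N$: $\rho(t)$ is revealed; $A_t=\{S\in\mathcal S:\rho(t)\in S,\ \rho(t')\in S\text{ for some }t'<t\}$ for $t>1$ and $A_1=\{S:\rho(1)\in S\}$; predict $\hat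 y_{\rho(t)}=\sum_{S\in A_t}\hat w_{S,t}T_\lambda(\hat y^{(S)}_{\rho(t)})$ with $\hat w_{S,t}=w_{S,t}/\sum_{S'\in A_t}w_{S',t}$; after $y_{\rho(t)}$ is revealed set $w_{S,t+1}=w_{S,t}$ for $S\notin A_t$ and $w_{S,t+1}=\frac{w_{S,t}e^{-\alpha\ell_{S,t}}}{\sum_{S'\in A_t}w_{S',t}e^{-\alpha\ell_{S',t}}}\sum_{S'\in A_t}w_{S',t}$ for $S\in A_t$, where $\ell_{S,t}=(T_\lambda(y_{\rho(t)})-T_\lambda(\hat y^{(S)}_{\rho(t)}))^2$. $\hat\theta^{OM}$ denotes the output $\hat y$. *)

theory Defs
  imports Complex_Main
begin

definition grid :: "nat \<Rightarrow> nat \<Rightarrow> nat list set" where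
  "grid d n = {x. length x = d \<and> (\<forall>i<d. 1 \<le> x ! i \<and> x ! i \<le> n)}"

definition dy_int :: "nat \<Rightarrow> nat \<Rightarrow> nat set" where
  "dy_int s a = {(a - 1) * 2 ^ s <.. a * 2 ^ s}"

text \<open>Rectangle described by a list of (level, index) pairs, one per coordinate.\<close>
definition rect_set :: "(nat \<times> nat) list \<Rightarrow> nat list set" where
  "rect_set rs = {x. length x = length rs \<and> (\<forall>i<length rs. x ! i \<in> dy_int (fst (rs ! i)) (snd (rs ! i)))}"

definition dyadic_rects :: "nat \<Rightarrow> nat \<Rightarrow> nat list set set" where
  "dyadic_rects d k = {rect_set rs | rs. length rs = d \<and>
      (\<forall>i<d. fst (rs ! i) \<le> k \<and> 1 \<le> snd (rs ! i) \<and> snd (rs ! i) \<le> 2 ^ (k - fst (rs ! i)))}"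

definition trunc :: "real \<Rightarrow> real \<Rightarrow> real" where
  "trunc lam x = min (max x (- lam)) lam"

definition prior :: "(nat \<Rightarrow> nat list) \<Rightarrow> nat \<Rightarrow> nat list set" where
  "prior \<rho> t = \<rho> ` {1..<t}"

definition mean :: "(nat list \<Rightarrow> real) \<Rightarrow> nat list set \<Rightarrow> real" where
  "mean y U = (if U = {} then 0 else (\<Sum>u\<in>U. y u) / real (card U))"

definition expert_pred :: "(nat \<Rightarrow> nat list) \<Rightarrow> (nat list \<Rightarrow> real) \<Rightarrow> nat list set \<Rightarrow> nat \<Rightarrow> real" where
  "expert_pred \<rho> y S t = mean y (prior \<rho> t \<inter> S)"

definition active :: "nat list set set \<Rightarrow> (nat \<Rightarrow> nat list) \<Rightarrow> nat \<Rightarrow> nat list set set" where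
  "active F \<rho> t = {S \<in> F. \<rho> t \<in> S \<and> (t = 1 \<or> prior \<rho> t \<inter> S \<noteq> {})}"

definition loss :: "real \<Rightarrow> (nat \<Rightarrow> nat list) \<Rightarrow> (nat list \<Rightarrow> real) \<Rightarrow> nat list set \<Rightarrow> nat \<Rightarrow> real" where
  "loss lam \<rho> y S t = (trunc lam (y (\<rho> t)) - trunc lam (expert_pred \<rho> y S t))\<^sup>2"

text \<open>omw F rho y lam t is the weight vector w_{.,t+1} (weights after processing time t).\<close>
fun omw :: "nat list set set \<Rightarrow> (nat \<Rightarrow> nat list) \<Rightarrow> (nat list \<Rightarrow> real) \<Rightarrow> real \<Rightarrow> nat \<Rightarrow> nat list set \<Rightarrow> real" where
  "omw F \<rho> y lam 0 = (\<lambda>S. 1 / real (card F))"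
| "omw F \<rho> y lam (Suc t) =
     (let w = omw F \<rho> y lam t; A = active F \<rho> (Suc t); \<alpha> = 1 / (8 * lam\<^sup>2) in
      (\<lambda>S. if S \<in> A then
              w S * exp (- \<alpha> * loss lam \<rho> y S (Suc t))
                / (\<Sum>S'\<in>A. w S' * exp (- \<alpha> * loss lam \<rho> y S' (Suc t)))
                * (\<Sum>S'\<in>A. w S')
            else w S))"

text \<open>The OMADRE prediction at time t (1-based).\<close>
definition om_pred :: "nat list set set \<Rightarrow> (nat \<Rightarrow> nat list) \<Rightarrow> (nat list \<Rightarrow> real) \<Rightarrow> real \<Rightarrow> nat \<Rightarrow> real" where
  "om_pred F \<rho> y lam t =
     (let w = omw F \<rho> y lam (t - 1); A = active F \<rho> t in
      (\<Sum>S\<in>A. w S / (\<Sum>S'\<in>A. w S') * trunc lam (expert_pred \<rho> y S t)))"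

text \<open>Cost model: unit cost for each arithmetic operation, comparison, table lookup/update
  and for enumerating one rectangle id (rectangle identifiers are single words).
  The rectangles containing x: in coordinate i the level-s dyadic interval containing
  x_i has index ceil(x_i / 2^s).\<close>
definition rects_containing :: "nat \<Rightarrow> nat list \<Rightarrow> nat list set list" where
  "rects_containing k x =
     map rect_set (product_lists (map (\<lambda>xi. map (\<lambda>s. (s, (xi + 2 ^ s - 1) div 2 ^ s)) [0..<k + 1]) x))"

type_synonym om_state = "(nat list set \<Rightarrow> real) \<times> (nat list set \<Rightarrow> nat) \<times> (nat list set \<Rightarrow> real)"

text \<open>One step at time t with revealed point x; the label yt is used only after the
  prediction has been formed.
  State: running sums, running counts, (unnormalised) weights of the experts.\<close>
definition impl_step :: "nat \<Rightarrow> real \<Rightarrow> nat \<Rightarrow> nat list \<Rightarrow> real \<Rightarrow> om_state \<Rightarrow> real \<times> om_state \<times> nat" where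
  "impl_step k lam t x yt st =
     (case st of (sm, cn, wt) \<Rightarrow>
      let Rs = rects_containing k x;
          tr = (\<lambda>R. trunc lam (if cn R = 0 then 0 else sm R / real (cn R)));
          Act = (if t = 1 then Rs else filter (\<lambda>R. 0 < cn R) Rs);
          Z = sum_list (map wt Act);
          P = sum_list (map (\<lambda>R. wt R * tr R) Act);
          pred = P / Z;
          \<alpha> = 1 / (8 * lam\<^sup>2);
          v = (\<lambda>R. wt R * exp (- \<alpha> * (trunc lam yt - tr R)\<^sup>2));
          Z' = sum_list (map v Act);
          wt' = fold (\<lambda>R w. w(R := v R / Z' * Z)) Act wt;
          sm' = fold (\<lambda>R s. s(R := s R + yt)) Rs sm;
          cn' = fold (\<lambda>R c. c(R := c R + 1)) Rs cn;
          cost = length Rs              \<comment> \<open>enumerate the rectangles containing x\<close>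
               + 8 * length Rs          \<comment> \<open>expert predictions: lookups, test, division, truncation\<close>
               + 2 * length Rs          \<comment> \<open>activity test\<close>
               + 2 * length Act         \<comment> \<open>Z\<close>
               + 3 * length Act         \<comment> \<open>P\<close>
               + 1                      \<comment> \<open>pred\<close>
               + 4                      \<comment> \<open>alpha and truncation of yt\<close>
               + 8 * length Act         \<comment> \<open>v and Z'\<close>
               + 4 * length Act         \<comment> \<open>weight updates\<close>
               + 3 * length Rs          \<comment> \<open>sum updates\<close>
               + 3 * length Rs          \<comment> \<open>count updates\<close>
      in (pred, (sm', cn', wt'), cost))"

fun impl_run :: "nat \<Rightarrow> real \<Rightarrow> (nat \<Rightarrow> nat list) \<Rightarrow> (nat list \<Rightarrow> real) \<Rightarrow> nat \<Rightarrow> (nat \<Rightarrow> real) \<times> om_state \<times> nat" where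
  "impl_run k lam \<rho> y 0 = ((\<lambda>_. 0), ((\<lambda>_. 0), (\<lambda>_. 0), (\<lambda>_. 1)), 0)"
| "impl_run k lam \<rho> y (Suc t) =
     (case impl_run k lam \<rho> y t of (ps, st, c) \<Rightarrow>
        (case impl_step k lam (Suc t) (\<rho> (Suc t)) (y (\<rho> (Suc t))) st of (p, st', c') \<Rightarrow>
           (ps(Suc t := p), st', c + c')))"

end

theory Submission
  imports Defs
begin

lemma div_aux: "0 < (q::nat) \<Longrightarrow> m < (m div q + 1) * q"
proof -
  assume q: "0 < q"
  have "m mod q < q" using q by simp
  moreover have "m div q * q + m mod q = m" by simp
  moreover have "(m div q + 1) * q = m div q * q + q" by simp
  ultimately show ?thesis by linarith
qed

lemma dy_mem: "1 \<le> (xi::nat) \<Longrightarrow> xi \<in> dy_int s ((xi - 1) div 2^s + 1)"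
  unfolding dy_int_def
proof -
  assume h: "1 \<le> xi"
  have a: "(xi - 1) div 2^s * 2^s \<le> xi - 1" by (simp add: minus_mod_eq_div_mult[symmetric])
  have b: "xi - 1 < ((xi - 1) div 2^s + 1) * 2^s"
    by (rule div_aux) simp
  show "xi \<in> {((xi - 1) div 2 ^ s + 1 - 1) * 2 ^ s<..((xi - 1) div 2 ^ s + 1) * 2 ^ s}"
    unfolding greaterThanAtMost_iff using a b h by (simp only: add_diff_cancel_right') arith
qed

lemma dy_uniq: "(xi::nat) \<in> dy_int s a \<Longrightarrow> 1 \<le> a \<Longrightarrow> a = (xi - 1) div 2^s + 1"
  unfolding dy_int_def
proof -
  assume h: "xi \<in> {(a - 1) * 2 ^ s<..a * 2 ^ s}" and a: "1 \<le> a"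
  have e: "a * 2^s = (a - 1) * 2^s + 2^s" using a
    by (cases a) simp_all
  have 1: "2^s * (a-1) \<le> xi - 1" "xi - 1 < 2^s * Suc (a - 1)"
  proof -
    have "(a - 1) * 2^s < xi" "xi \<le> (a - 1) * 2^s + 2^s" using h e by auto
    then have "(a-1) * 2^s \<le> xi - 1" "xi - 1 < (a - 1) * 2^s + 2^s" by arith+
    then show "2^s * (a-1) \<le> xi - 1" "xi - 1 < 2^s * Suc (a - 1)"
      by (simp_all add: mult.commute)
  qed
  have "(xi - 1) div 2^s = a - 1"
    by (rule div_nat_eqI[OF 1])
  then show ?thesis using a by linarith
qed

lemma dy_bound: "1 \<le> (xi::nat) \<Longrightarrow> xi \<le> 2^k \<Longrightarrow> s \<le> k \<Longrightarrow> (xi - 1) div 2^s + 1 \<le> 2^(k - s)"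
proof -
  assume "1 \<le> xi" "xi \<le> 2^k" "s \<le> k"
  then have "xi - 1 < 2^(k-s) * 2^s" by (simp add: power_add[symmetric])
  then have "(xi - 1) div 2^s < 2^(k-s)" by (simp add: less_mult_imp_div_less)
  then show ?thesis by simp
qed

lemma ivl_inj: "{p<..Q} = {p'<..Q'} \<Longrightarrow> (p::nat) < Q \<Longrightarrow> p' < Q' \<Longrightarrow> p = p' \<and> Q = Q'"
proof -
  assume e: "{p<..Q} = {p'<..Q'}" and l: "p < Q" "p' < Q'"
  have "Q \<in> {p'<..Q'}" using e l by auto
  moreover have "Q' \<in> {p<..Q}" using e l by auto
  moreover have "Suc p \<in> {p'<..Q'}" using e l by auto
  moreover have "Suc p' \<in> {p<..Q}" using e l by auto
  ultimately show ?thesis by auto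
qed

lemma dy_inj: "dy_int s a = dy_int s' a' \<Longrightarrow> 1 \<le> a \<Longrightarrow> 1 \<le> a' \<Longrightarrow> s = s' \<and> a = a'"
proof -
  assume e: "dy_int s a = dy_int s' a'" and a: "1 \<le> a" "1 \<le> a'"
  have e1: "a * 2^s = (a - 1) * 2^s + 2^s" using a by (cases a) simp_all
  have e2: "a' * 2^s' = (a' - 1) * 2^s' + 2^s'" using a by (cases a') simp_all
  have "(a - 1) * 2^s = (a' - 1) * 2^s' \<and> a * 2^s = a' * 2^s'"
    apply (rule ivl_inj) using e e1 e2 unfolding dy_int_def by simp_all
  then have "(2::nat)^s = 2^s'" using e1 e2 by linarith
  then have s: "s = s'" by simp
  then have "a * 2^s = a' * 2^s" using \<open>(a - 1) * 2^s = (a' - 1) * 2^s' \<and> a * 2^s = a' * 2^s'\<close> by simp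
  then show ?thesis using s by simp
qed

lemma cidx_eq: "1 \<le> (xi::nat) \<Longrightarrow> (xi + 2^s - 1) div 2^s = (xi - 1) div 2^s + 1"
proof -
  assume "1 \<le> xi"
  then have "xi + 2^s - 1 = (xi - 1) + 1 * 2^s" by simp
  then show ?thesis by simp
qed

definition cl :: "nat \<Rightarrow> nat \<Rightarrow> (nat \<times> nat) list" where
  "cl k xi = map (\<lambda>s. (s, (xi + 2 ^ s - 1) div 2 ^ s)) [0..<k + 1]"

definition valid :: "nat \<Rightarrow> nat \<Rightarrow> (nat \<times> nat) list \<Rightarrow> bool" where
  "valid d k rs \<longleftrightarrow> length rs = d \<and>
      (\<forall>i<d. fst (rs ! i) \<le> k \<and> 1 \<le> snd (rs ! i) \<and> snd (rs ! i) \<le> 2 ^ (k - fst (rs ! i)))"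

lemma rc_def2: "rects_containing k x = map rect_set (product_lists (map (cl k) x))"
  unfolding rects_containing_def cl_def by simp

lemma pl_mem: "rs \<in> set (product_lists (map (cl k) x)) \<longleftrightarrow>
   length rs = length x \<and> (\<forall>i<length x. fst (rs!i) \<le> k \<and> snd (rs!i) = (x!i + 2^fst (rs!i) - 1) div 2^fst (rs!i))"
proof -
  have cm: "p \<in> set (cl k xi) \<longleftrightarrow> fst p \<le> k \<and> snd p = (xi + 2^fst p - 1) div 2^fst p" for p xi
  proof -
    have "set (cl k xi) = (\<lambda>s. (s, (xi + 2 ^ s - 1) div 2 ^ s)) ` {..k}"
    proof -
      have "{0..<k+1} = {..k}" by auto
      then show ?thesis unfolding cl_def set_map set_upt by simp
    qed
    then show ?thesis by (cases p) auto
  qed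
  show ?thesis unfolding product_lists_set list_all2_conv_all_nth by (auto simp: cm)
qed

lemma grid_nth: "x \<in> grid d n \<Longrightarrow> i < d \<Longrightarrow> 1 \<le> x ! i \<and> x ! i \<le> n"
  unfolding grid_def by auto

lemma L1: assumes x: "x \<in> grid d (2^k)" and rs: "rs \<in> set (product_lists (map (cl k) x))"
  shows "valid d k rs \<and> x \<in> rect_set rs"
proof -
  have lx: "length x = d" using x unfolding grid_def by auto
  have m: "length rs = d" "\<And>i. i < d \<Longrightarrow> fst (rs!i) \<le> k \<and> snd (rs!i) = (x!i - 1) div 2^fst (rs!i) + 1"
    using rs lx grid_nth[OF x] cidx_eq unfolding pl_mem by auto
  show ?thesis unfolding valid_def rect_set_def
    using m grid_nth[OF x] dy_mem dy_bound lx by auto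
qed

lemma L2: assumes x: "x \<in> grid d (2^k)" and v: "valid d k rs" and xr: "x \<in> rect_set rs"
  shows "rs \<in> set (product_lists (map (cl k) x))"
proof -
  have lx: "length x = d" using x unfolding grid_def by auto
  have "\<And>i. i < d \<Longrightarrow> snd (rs!i) = (x!i - 1) div 2^fst (rs!i) + 1"
    using v xr dy_uniq unfolding valid_def rect_set_def by auto
  then show ?thesis unfolding pl_mem using v lx grid_nth[OF x] cidx_eq unfolding valid_def by auto
qed

lemma L3: assumes v: "valid d k rs" "valid d k rs'" and xr: "x \<in> rect_set rs"
  and e: "rect_set rs = rect_set rs'"
  shows "rs = rs'"
proof (rule nth_equalityI)
  show "length rs = length rs'" using v unfolding valid_def by simp
  fix i assume i: "i < length rs"
  have lx: "length x = length rs" using xr unfolding rect_set_def by simp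
  have i': "i < length rs'" using i v unfolding valid_def by simp
  have sub: "dy_int (fst (r1!i)) (snd (r1!i)) \<subseteq> dy_int (fst (r2!i)) (snd (r2!i))"
    if e: "rect_set r1 = rect_set r2" and xr: "x \<in> rect_set r1" and ii: "i < length r1"
    and l: "length r1 = length r2"
    for r1 r2
  proof
    fix z assume z: "z \<in> dy_int (fst (r1!i)) (snd (r1!i))"
    have lx1: "length x = length r1" using xr unfolding rect_set_def by simp
    have "x[i := z] \<in> rect_set r1" using xr z ii lx1 unfolding rect_set_def
      by (simp add: nth_list_update)
    then have "x[i := z] \<in> rect_set r2" using e by simp
    then have "x[i := z] ! i \<in> dy_int (fst (r2!i)) (snd (r2!i))" using ii l unfolding rect_set_def
      by auto
    then show "z \<in> dy_int (fst (r2!i)) (snd (r2!i))" using ii lx1 by simp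
  qed
  have xr': "x \<in> rect_set rs'" using xr e by simp
  have "dy_int (fst (rs!i)) (snd (rs!i)) = dy_int (fst (rs'!i)) (snd (rs'!i))"
    using sub[OF e xr i] sub[OF e[symmetric] xr' i'] v unfolding valid_def by auto
  moreover have "1 \<le> snd (rs!i)" "1 \<le> snd (rs'!i)" using v i i' unfolding valid_def by auto
  ultimately have "fst (rs!i) = fst (rs'!i) \<and> snd (rs!i) = snd (rs'!i)" using dy_inj by blast
  then show "rs ! i = rs' ! i" by (simp add: prod_eq_iff)
qed

lemma F_eq: "dyadic_rects d k = rect_set ` {rs. valid d k rs}"
  unfolding dyadic_rects_def valid_def by blast

lemma F_finite: "finite (dyadic_rects d k)"
proof -
  have "{rs. valid d k rs} \<subseteq> {rs. set rs \<subseteq> {..k} \<times> {..2^k} \<and> length rs = d}"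
  proof
    fix rs assume v: "rs \<in> {rs. valid d k rs}"
    have "\<forall>p\<in>set rs. p \<in> {..k} \<times> {..2^k}"
    proof
      fix p assume "p \<in> set rs"
      then obtain i where i: "i < length rs" "p = rs ! i" by (auto simp: in_set_conv_nth)
      have "snd p \<le> 2^(k - fst p)" "fst p \<le> k" using v i unfolding valid_def by auto
      moreover have "(2::nat)^(k - fst p) \<le> 2^k" by (rule power_increasing) auto
      ultimately have "snd p \<le> 2^k" "fst p \<le> k" by linarith+
      then show "p \<in> {..k} \<times> {..2^k}" by (cases p) auto
    qed
    then show "rs \<in> {rs. set rs \<subseteq> {..k} \<times> {..2^k} \<and> length rs = d}" using v unfolding valid_def by auto
  qed
  moreover have "finite {rs. set rs \<subseteq> {..k} \<times> ({..2^k}::nat set) \<and> length rs = d}"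
    by (rule finite_lists_length_eq) simp
  ultimately have "finite {rs. valid d k rs}" by (rule finite_subset)
  then show ?thesis unfolding F_eq by (rule finite_imageI)
qed

lemma RC_set: assumes x: "x \<in> grid d (2^k)"
  shows "set (rects_containing k x) = {S \<in> dyadic_rects d k. x \<in> S}"
proof
  show "set (rects_containing k x) \<subseteq> {S \<in> dyadic_rects d k. x \<in> S}"
    unfolding rc_def2 F_eq using L1[OF x] by auto
  show "{S \<in> dyadic_rects d k. x \<in> S} \<subseteq> set (rects_containing k x)"
  proof
    fix S assume "S \<in> {S \<in> dyadic_rects d k. x \<in> S}"
    then obtain rs where "valid d k rs" "S = rect_set rs" "x \<in> rect_set rs" unfolding F_eq by auto
    then show "S \<in> set (rects_containing k x)" unfolding rc_def2 using L2[OF x] by auto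
  qed
qed

lemma RC_distinct: assumes x: "x \<in> grid d (2^k)"
  shows "distinct (rects_containing k x)"
  unfolding rc_def2 distinct_map
proof
  show "distinct (product_lists (map (cl k) x))"
  proof (rule distinct_product_lists)
    show "\<forall>xs\<in>set (map (cl k) x). distinct xs"
    proof
      fix xs assume "xs \<in> set (map (cl k) x)"
      then obtain xi where "xs = cl k xi" by auto
      moreover have "distinct (cl k xi)" unfolding cl_def distinct_map
        by (simp add: inj_on_def del: upt_Suc)
      ultimately show "distinct xs" by simp
    qed
  qed
  show "inj_on rect_set (set (product_lists (map (cl k) x)))"
  proof (rule inj_onI)
    fix a b assume a: "a \<in> set (product_lists (map (cl k) x))" and b: "b \<in> set (product_lists (map (cl k) x))"
      and e: "rect_set a = rect_set b"
    show "a = b" using L1[OF x a] L1[OF x b] e by (intro L3[of d k a b x]) auto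
  qed
qed

lemma foldr_const: "foldr (*) (map (\<lambda>_. c) xs) (1::nat) = c ^ length xs"
  by (induction xs) auto

lemma RC_length: assumes x: "x \<in> grid d (2^k)"
  shows "length (rects_containing k x) = (k+1)^d"
proof -
  have "length x = d" using x unfolding grid_def by auto
  moreover have ml: "map length (map (cl k) x) = map (\<lambda>_. k+1) x" by (simp add: cl_def)
  ultimately show ?thesis unfolding rc_def2 length_map length_product_lists ml foldr_const by simp
qed

lemma FU1: "fold (\<lambda>R w. w(R := f R)) xs g = (\<lambda>R. if R \<in> set xs then f R else g R)"
  by (induction xs arbitrary: g) (auto simp: fun_eq_iff)

lemma FU2: "distinct xs \<Longrightarrow> fold (\<lambda>R s. s(R := s R + c)) xs g = (\<lambda>R. if R \<in> set xs then g R + c else g R)"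
  by (induction xs arbitrary: g) (auto simp: fun_eq_iff)

lemma step_props:
  fixes lam yt :: real and t k :: nat and x :: "nat list"
    and sm :: "nat list set \<Rightarrow> real" and cn :: "nat list set \<Rightarrow> nat" and wt :: "nat list set \<Rightarrow> real"
  assumes dist: "distinct (rects_containing k x)"
  defines "Rs \<equiv> rects_containing k x"
  defines "tr \<equiv> (\<lambda>R. trunc lam (if cn R = 0 then 0 else sm R / real (cn R)))"
  defines "Act \<equiv> (if t = 1 then Rs else filter (\<lambda>R. 0 < cn R) Rs)"
  defines "v \<equiv> (\<lambda>R. wt R * exp (- (1 / (8 * lam\<^sup>2)) * (trunc lam yt - tr R)\<^sup>2))"
  shows "impl_step k lam t x yt (sm, cn, wt) =
     (sum_list (map (\<lambda>R. wt R * tr R) Act) / sum_list (map wt Act),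
      ((\<lambda>R. if R \<in> set Rs then sm R + yt else sm R),
       (\<lambda>R. if R \<in> set Rs then cn R + 1 else cn R),
       (\<lambda>R. if R \<in> set Act then v R / sum_list (map v Act) * sum_list (map wt Act) else wt R)),
      17 * length Rs + 17 * length Act + 5)"
  unfolding impl_step_def Let_def prod.case Rs_def tr_def Act_def v_def
  unfolding FU1 FU2[OF dist]
  by simp

lemma scale_aux: "(c::real) \<noteq> 0 \<Longrightarrow> (c * a) / (c * b) * (c * e) = c * (a / b * e)"
  by (cases "b = 0") (simp_all add: field_simps)

definition INVP where
  "INVP F lam \<rho> y t L ps sm cn wt c \<longleftrightarrow>
    (\<forall>j\<in>{1..t}. ps j = om_pred F \<rho> y lam j) \<and>
    (\<forall>R\<in>F. sm R = (\<Sum>u\<in>prior \<rho> (Suc t) \<inter> R. y u) \<and> cn R = card (prior \<rho> (Suc t) \<inter> R)) \<and>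
    (\<forall>S. wt S = real (card F) * omw F \<rho> y lam t S) \<and>
    c \<le> t * (34 * L + 5)"

lemma INV:
  fixes d k :: nat and \<rho> :: "nat \<Rightarrow> nat list" and y :: "nat list \<Rightarrow> real" and lam :: real
  assumes bij: "bij_betw \<rho> {1..(2^k)^d} (grid d (2^k))"
  shows "t \<le> (2^k)^d \<Longrightarrow> impl_run k lam \<rho> y t = (ps, (sm, cn, wt), c) \<Longrightarrow>
     INVP (dyadic_rects d k) lam \<rho> y t ((k+1)^d) ps sm cn wt c"
proof -
  define N :: nat where "N = (2^k)^d"
  define F where "F = dyadic_rects d k"
  define L :: nat where "L = (k+1)^d"
  have inj: "inj_on \<rho> {1..N}" using bij unfolding N_def bij_betw_def by simp
  have img: "\<rho> ` {1..N} = grid d (2^k)" using bij unfolding N_def bij_betw_def by simp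
  have Npos: "1 \<le> N" unfolding N_def by simp
  have ing: "\<rho> j \<in> grid d (2^k)" if "1 \<le> j" "j \<le> N" for j using img that by auto
  have finF: "finite F" unfolding F_def by (rule F_finite)
  have "set (rects_containing k (\<rho> 1)) \<noteq> {}"
    using RC_length[OF ing[OF _ Npos]] by (cases "rects_containing k (\<rho> 1)") auto
  then have "F \<noteq> {}" using RC_set[OF ing[OF _ Npos]] unfolding F_def by auto
  then have cF: "real (card F) \<noteq> 0" using finF by simp
  have prfin: "finite (prior \<rho> j)" for j unfolding prior_def by simp
  have prsuc: "prior \<rho> (Suc j) = insert (\<rho> j) (prior \<rho> j)" if "1 \<le> j" for j
  proof -
    have "{1..<Suc j} = insert j {1..<j}" using that by auto
    then show ?thesis unfolding prior_def by simp
  qed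
  have notin: "\<rho> j \<notin> prior \<rho> j" if "1 \<le> j" "j \<le> N" for j
  proof
    assume "\<rho> j \<in> prior \<rho> j"
    then obtain i where i: "i \<in> {1..<j}" "\<rho> i = \<rho> j" unfolding prior_def by auto
    then have "i = j" using inj that by (intro inj_onD[OF inj]) auto
    then show False using i by simp
  qed
  show "t \<le> (2^k)^d \<Longrightarrow> impl_run k lam \<rho> y t = (ps, (sm, cn, wt), c) \<Longrightarrow>
     INVP (dyadic_rects d k) lam \<rho> y t ((k+1)^d) ps sm cn wt c"
    unfolding N_def[symmetric] F_def[symmetric] L_def[symmetric]
  proof (induction t arbitrary: ps sm cn wt c)
    case 0
    then have e: "ps = (\<lambda>_. 0)" "sm = (\<lambda>_. 0)" "cn = (\<lambda>_. 0)" "wt = (\<lambda>_. 1)" "c = 0" by auto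
    have p1: "prior \<rho> (Suc 0) = {}" unfolding prior_def by simp
    show ?case unfolding INVP_def e p1 using cF by simp
  next
    case (Suc t)
    have tN: "t \<le> N" "Suc t \<le> N" using Suc.prems by auto
    obtain ps0 st0 c0 where r0: "impl_run k lam \<rho> y t = (ps0, st0, c0)" by (metis prod_cases3)
    obtain sm0 cn0 wt0 where st0: "st0 = (sm0, cn0, wt0)" by (metis prod_cases3)
    have r: "impl_run k lam \<rho> y t = (ps0, (sm0, cn0, wt0), c0)" using r0 st0 by simp
    have IV: "INVP F lam \<rho> y t L ps0 sm0 cn0 wt0 c0" by (rule Suc.IH[OF tN(1) r])
    define x where "x = \<rho> (Suc t)"
    have xg: "x \<in> grid d (2^k)" unfolding x_def using ing tN by simp
    have dist: "distinct (rects_containing k x)" by (rule RC_distinct[OF xg])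
    define Rs where "Rs = rects_containing k x"
    define tr where "tr = (\<lambda>R. trunc lam (if cn0 R = 0 then 0 else sm0 R / real (cn0 R)))"
    define Act where "Act = (if Suc t = 1 then Rs else filter (\<lambda>R. 0 < cn0 R) Rs)"
    define v where "v = (\<lambda>R. wt0 R * exp (- (1 / (8 * lam\<^sup>2)) * (trunc lam (y x) - tr R)\<^sup>2))"
    have st: "impl_step k lam (Suc t) x (y x) (sm0, cn0, wt0) =
     (sum_list (map (\<lambda>R. wt0 R * tr R) Act) / sum_list (map wt0 Act),
      ((\<lambda>R. if R \<in> set Rs then sm0 R + y x else sm0 R),
       (\<lambda>R. if R \<in> set Rs then cn0 R + 1 else cn0 R),
       (\<lambda>R. if R \<in> set Act then v R / sum_list (map v Act) * sum_list (map wt0 Act) else wt0 R)),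
      17 * length Rs + 17 * length Act + 5)"
      unfolding Rs_def tr_def Act_def v_def by (rule step_props[OF dist])
    have "impl_run k lam \<rho> y (Suc t) = (ps0(Suc t := sum_list (map (\<lambda>R. wt0 R * tr R) Act) / sum_list (map wt0 Act)),
      ((\<lambda>R. if R \<in> set Rs then sm0 R + y x else sm0 R),
       (\<lambda>R. if R \<in> set Rs then cn0 R + 1 else cn0 R),
       (\<lambda>R. if R \<in> set Act then v R / sum_list (map v Act) * sum_list (map wt0 Act) else wt0 R)),
      c0 + (17 * length Rs + 17 * length Act + 5))"
      using r st unfolding x_def by simp
    then have e: "ps = ps0(Suc t := sum_list (map (\<lambda>R. wt0 R * tr R) Act) / sum_list (map wt0 Act))"
      "sm = (\<lambda>R. if R \<in> set Rs then sm0 R + y x else sm0 R)"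
      "cn = (\<lambda>R. if R \<in> set Rs then cn0 R + 1 else cn0 R)"
      "wt = (\<lambda>R. if R \<in> set Act then v R / sum_list (map v Act) * sum_list (map wt0 Act) else wt0 R)"
      "c = c0 + (17 * length Rs + 17 * length Act + 5)"
      using Suc.prems(2) by auto
    have IV1: "\<forall>j\<in>{1..t}. ps0 j = om_pred F \<rho> y lam j"
      and IV2: "\<And>R. R \<in> F \<Longrightarrow> sm0 R = (\<Sum>u\<in>prior \<rho> (Suc t) \<inter> R. y u) \<and> cn0 R = card (prior \<rho> (Suc t) \<inter> R)"
      and IV3: "\<And>S. wt0 S = real (card F) * omw F \<rho> y lam t S"
      and IV4: "c0 \<le> t * (34 * L + 5)"
      using IV unfolding INVP_def by auto
    have setRs: "set Rs = {S \<in> F. x \<in> S}" unfolding Rs_def F_def by (rule RC_set[OF xg])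
    have lenRs: "length Rs = L" unfolding Rs_def L_def by (rule RC_length[OF xg])
    have distRs: "distinct Rs" unfolding Rs_def by (rule dist)
    define A where "A = active F \<rho> (Suc t)"
    have cnpos: "0 < cn0 R \<longleftrightarrow> prior \<rho> (Suc t) \<inter> R \<noteq> {}" if "R \<in> F" for R
      using IV2[OF that] prfin[of "Suc t"] by (simp add: card_gt_0_iff)
    have setAct: "set Act = A"
      unfolding Act_def A_def active_def x_def[symmetric] using cnpos setRs by auto
    have distAct: "distinct Act" unfolding Act_def using distRs by simp
    have lenAct: "length Act \<le> L" unfolding Act_def using lenRs by auto
    have AF: "A \<subseteq> F" unfolding A_def active_def by auto
    have trE: "tr R = trunc lam (expert_pred \<rho> y R (Suc t))" if "R \<in> F" for R
      using IV2[OF that] prfin[of "Suc t"]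
      unfolding tr_def expert_pred_def mean_def by (auto simp: Int_commute)
    define w where "w = omw F \<rho> y lam t"
    define cF where "cF = real (card F)"
    define E where "E = (\<lambda>R. trunc lam (expert_pred \<rho> y R (Suc t)))"
    define ee where "ee = (\<lambda>S. exp (- (1 / (8 * lam\<^sup>2)) * loss lam \<rho> y S (Suc t)))"
    have wt0E: "wt0 S = cF * w S" for S unfolding cF_def w_def by (rule IV3)
    have P1: "sum_list (map (\<lambda>R. wt0 R * tr R) Act) = cF * (\<Sum>R\<in>A. w R * E R)"
    proof -
      have "sum_list (map (\<lambda>R. wt0 R * tr R) Act) = (\<Sum>R\<in>A. wt0 R * tr R)"
        using sum_list_distinct_conv_sum_set[OF distAct] setAct by simp
      also have "\<dots> = (\<Sum>R\<in>A. cF * (w R * E R))"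
        using AF trE wt0E unfolding E_def by (intro sum.cong) auto
      finally show ?thesis by (simp add: sum_distrib_left)
    qed
    have P2: "sum_list (map wt0 Act) = cF * (\<Sum>R\<in>A. w R)"
    proof -
      have "sum_list (map wt0 Act) = (\<Sum>R\<in>A. wt0 R)"
        using sum_list_distinct_conv_sum_set[OF distAct] setAct by simp
      also have "\<dots> = (\<Sum>R\<in>A. cF * w R)" using wt0E by simp
      finally show ?thesis by (simp add: sum_distrib_left)
    qed
    have vE: "v S = cF * (w S * ee S)" if "S \<in> A" for S
      using that AF trE[of S] wt0E[of S] unfolding v_def ee_def loss_def x_def by auto
    have P3: "sum_list (map v Act) = cF * (\<Sum>R\<in>A. w R * ee R)"
    proof -
      have "sum_list (map v Act) = (\<Sum>R\<in>A. v R)"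
        using sum_list_distinct_conv_sum_set[OF distAct] setAct by simp
      also have "\<dots> = (\<Sum>R\<in>A. cF * (w R * ee R))"
        using vE by (intro sum.cong) auto
      finally show ?thesis by (simp add: sum_distrib_left)
    qed
    have cF0: "cF \<noteq> 0" unfolding cF_def by (rule cF)
    have part1: "\<forall>j\<in>{1..Suc t}. ps j = om_pred F \<rho> y lam j"
    proof
      fix j assume j: "j \<in> {1..Suc t}"
      show "ps j = om_pred F \<rho> y lam j"
      proof (cases "j = Suc t")
        case False
        then show ?thesis using j IV1 e(1) by auto
      next
        case True
        have "om_pred F \<rho> y lam (Suc t) = (\<Sum>S\<in>A. w S / (\<Sum>S'\<in>A. w S') * E S)"
          unfolding om_pred_def Let_def w_def A_def E_def by simp
        also have "\<dots> = (\<Sum>S\<in>A. w S * E S) / (\<Sum>S'\<in>A. w S')"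
          by (simp add: sum_divide_distrib)
        also have "\<dots> = (cF * (\<Sum>S\<in>A. w S * E S)) / (cF * (\<Sum>S'\<in>A. w S'))"
          using cF0 by simp
        finally show ?thesis using True e(1) P1 P2 by simp
      qed
    qed
    have prS: "prior \<rho> (Suc (Suc t)) = insert x (prior \<rho> (Suc t))"
      unfolding x_def by (rule prsuc) simp
    have xn: "x \<notin> prior \<rho> (Suc t)" unfolding x_def by (rule notin) (use tN in auto)
    have part2: "\<forall>R\<in>F. sm R = (\<Sum>u\<in>prior \<rho> (Suc (Suc t)) \<inter> R. y u) \<and> cn R = card (prior \<rho> (Suc (Suc t)) \<inter> R)"
    proof
      fix R assume R: "R \<in> F"
      show "sm R = (\<Sum>u\<in>prior \<rho> (Suc (Suc t)) \<inter> R. y u) \<and> cn R = card (prior \<rho> (Suc (Suc t)) \<inter> R)"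
      proof (cases "x \<in> R")
        case True
        then have "prior \<rho> (Suc (Suc t)) \<inter> R = insert x (prior \<rho> (Suc t) \<inter> R)" using prS by auto
        moreover have "R \<in> set Rs" using True R setRs by auto
        moreover have "finite (prior \<rho> (Suc t) \<inter> R)" using prfin by simp
        ultimately show ?thesis using IV2[OF R] e(2,3) xn by simp
      next
        case False
        then have "prior \<rho> (Suc (Suc t)) \<inter> R = prior \<rho> (Suc t) \<inter> R" using prS by auto
        moreover have "R \<notin> set Rs" using False setRs by auto
        ultimately show ?thesis using IV2[OF R] e(2,3) by simp
      qed
    qed
    have part3: "\<forall>S. wt S = cF * omw F \<rho> y lam (Suc t) S"
    proof
      fix S
      have om: "omw F \<rho> y lam (Suc t) S = (if S \<in> A then w S * ee S / (\<Sum>S'\<in>A. w S' * ee S') * (\<Sum>S'\<in>A. w S') else w S)"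
        unfolding w_def A_def ee_def by (simp add: Let_def)
      show "wt S = cF * omw F \<rho> y lam (Suc t) S"
      proof (cases "S \<in> A")
        case True
        then show ?thesis unfolding om e(4) using setAct P2 P3 vE[OF True] scale_aux[OF cF0] by simp
      next
        case False
        then show ?thesis unfolding om e(4) using setAct wt0E by simp
      qed
    qed
    have part4: "c \<le> Suc t * (34 * L + 5)"
      using e(5) IV4 lenRs lenAct by simp
    show ?case unfolding INVP_def using part1 part2 part3 part4 unfolding cF_def by blast
  qed
qed

lemma log_eq: "log 2 (2 * real (2 ^ k :: nat)) = real (k + 1)"
proof -
  have "2 * real (2 ^ k :: nat) = (2::real) ^ (k + 1)" by simp
  moreover have "log 2 ((2::real) ^ (k + 1)) = real (k + 1)" by (rule log_pow_cancel) simp_all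
  ultimately show ?thesis by (simp only:)
qed

theorem mainTheorem3:
  shows "\<exists>C::real. C > 0 \<and>
    (\<forall>(d::nat) (k::nat) (\<rho>::nat \<Rightarrow> nat list) (y::nat list \<Rightarrow> real) (lam::real).
       d \<ge> 1 \<longrightarrow> bij_betw \<rho> {1..(2 ^ k) ^ d} (grid d (2 ^ k)) \<longrightarrow>
       (let N = (2 ^ k) ^ d; (ps, st, c) = impl_run k lam \<rho> y N in
          (\<forall>t\<in>{1..N}. ps t = om_pred (dyadic_rects d k) \<rho> y lam t) \<and>
          real c \<le> C * real N * (log 2 (2 * real (2 ^ k :: nat))) ^ d))"
proof (intro exI[of _ 39] conjI allI impI)
  fix d k :: nat and \<rho> :: "nat \<Rightarrow> nat list" and y :: "nat list \<Rightarrow> real" and lam :: real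
  assume bij: "bij_betw \<rho> {1..(2 ^ k) ^ d} (grid d (2 ^ k))"
  define N :: nat where "N = (2 ^ k) ^ d"
  define L :: nat where "L = (k + 1) ^ d"
  obtain ps sm cn wt c where r: "impl_run k lam \<rho> y N = (ps, (sm, cn, wt), c)"
    by (metis prod_cases3)
  have I: "INVP (dyadic_rects d k) lam \<rho> y N L ps sm cn wt c"
    unfolding L_def by (rule INV[OF bij]) (use r N_def in auto)
  have p: "\<forall>t\<in>{1..N}. ps t = om_pred (dyadic_rects d k) \<rho> y lam t"
    using I unfolding INVP_def by auto
  have "c \<le> N * (34 * L + 5)" using I unfolding INVP_def by auto
  also have "\<dots> \<le> N * (39 * L)"
  proof -
    have "1 \<le> L" unfolding L_def by simp
    then show ?thesis by simp
  qed
  finally have "real c \<le> real (N * (39 * L))" by (simp only: of_nat_le_iff)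
  also have "\<dots> = 39 * real N * (log 2 (2 * real (2 ^ k :: nat))) ^ d"
    unfolding log_eq L_def by simp
  finally have cb: "real c \<le> 39 * real N * (log 2 (2 * real (2 ^ k :: nat))) ^ d" .
  show "let N = (2 ^ k) ^ d; (ps, st, c) = impl_run k lam \<rho> y N in
          (\<forall>t\<in>{1..N}. ps t = om_pred (dyadic_rects d k) \<rho> y lam t) \<and>
          real c \<le> 39 * real N * (log 2 (2 * real (2 ^ k :: nat))) ^ d"
    unfolding Let_def N_def[symmetric] r using p cb by simp
qed simp

end
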